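(* Let $p$ be a prime, $n\ge1$, $d\ge2$, and ${\bf a}_1,\dots,{\bf a}_N\in\mathbb{N}^{n+1}$ with coordinate sums $d$. If $u,v\in U_{\min}$, $\nu\in\mathbb{N}^N$, and $\sum_{j=1}^N\nu_j{\bf a}_j^+=pu-v$, then $\nu_j\le p-1$ for all $j$. In particular, $A_{uv}(\Lambda)\in(\mathbb{Q}\cap\mathbb{Z}_p)[\Lambda]$, so $A_{uv}(\Lambda)$ can be reduced modulo $p$.
   Context: ${\bf a}_j^+=({\bf a}_j,1)\in\mathbb{N}^{n+2}$. $\mu\ge0$ is defined by $\lceil(n+1)/d\rceil=\mu+1$. $U_{\min}$ is the set of $u=(u_0,\dots,u_{n+1})\in\mathbb{N}^{n+2}$ with $\sum_{i=0}^nu_i=du_{n+1}$, $u_i>0$ for all $i$, and $u_{n+1}=\mu+1$. For $u,v\in U_{\min}$, $$A_{uv}(\Lambda)=(-1)^{\mu+1}\sum_{\nu\in\mathbb{N}^N,\ \sum_j\nu_j{\bf a}_j^+=pu-v}\frac{\Lambda_1^{\nu_1}\cdots\Lambda_N^{\nu_N}}{\nu_1!\cdots\nu_N!}\in\mathbb{Q}[\Lambda_1,\dots,\Lambda_N].$$ *)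

theory Defs
  imports Complex_Main "HOL-Computational_Algebra.Primes"
begin

(* Points of N^(n+1) / N^(n+2) / N^N are functions nat => nat, only the relevant
   coordinates (0..n, 0..n+1, 1..N respectively) matter. *)

definition aplus :: "nat \<Rightarrow> (nat \<Rightarrow> nat \<Rightarrow> nat) \<Rightarrow> nat \<Rightarrow> nat \<Rightarrow> nat" where
  "aplus n a j i = (if i = n + 1 then 1 else a j i)"

definition mu :: "nat \<Rightarrow> nat \<Rightarrow> nat" where
  "mu n d = nat \<lceil>real (n + 1) / real d\<rceil> - 1"

definition U_min :: "nat \<Rightarrow> nat \<Rightarrow> (nat \<Rightarrow> nat) set" where
  "U_min n d = {u. (\<Sum>i\<le>n. u i) = d * u (n + 1) \<and> (\<forall>i\<le>n + 1. u i > 0)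
                  \<and> u (n + 1) = mu n d + 1}"

definition solves :: "nat \<Rightarrow> nat \<Rightarrow> (nat \<Rightarrow> nat \<Rightarrow> nat) \<Rightarrow> nat \<Rightarrow> (nat \<Rightarrow> nat) \<Rightarrow> (nat \<Rightarrow> nat) \<Rightarrow> (nat \<Rightarrow> nat) \<Rightarrow> bool" where
  "solves n p a N u v \<nu> \<longleftrightarrow>
     (\<forall>i\<le>n + 1. int (\<Sum>j=1..N. \<nu> j * aplus n a j i) = int p * int (u i) - int (v i))"

(* The polynomial A_uv(Lambda) in Q[Lambda_1..Lambda_N], represented by its coefficient
   function: the coefficient of the monomial Lambda^nu (nu supported in {1..N}). *)
definition A_coeff :: "nat \<Rightarrow> nat \<Rightarrow> nat \<Rightarrow> (nat \<Rightarrow> nat \<Rightarrow> nat) \<Rightarrow> nat \<Rightarrow> (nat \<Rightarrow> nat) \<Rightarrow> (nat \<Rightarrow> nat) \<Rightarrow> (nat \<Rightarrow> nat) \<Rightarrow> rat" where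
  "A_coeff n d p a N u v \<nu> =
     (if (\<forall>j. j \<notin> {1..N} \<longrightarrow> \<nu> j = 0) \<and> solves n p a N u v \<nu>
      then (-1) ^ (mu n d + 1) / of_nat (\<Prod>j=1..N. fact (\<nu> j))
      else 0)"

definition p_integral :: "nat \<Rightarrow> rat \<Rightarrow> bool" where
  "p_integral p r \<longleftrightarrow> coprime (int p) (snd (quotient_of r))"

end

theory Submission
  imports Defs
begin

lemma denom_dvd:
  fixes k m :: int
  assumes "m > 0"
  shows "snd (quotient_of (of_int k / of_int m)) dvd m"
proof -
  obtain a b where q: "quotient_of (of_int k / of_int m) = (a, b)" by fastforce
  have b0: "b > 0" using quotient_of_denom_pos[OF q] .
  have cp: "coprime a b" using quotient_of_coprime[OF q] .
  have "(of_int k / of_int m :: rat) = of_int a / of_int b" using quotient_of_div[OF q] .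
  hence "(of_int (k * b) :: rat) = of_int (a * m)" using assms b0
    by (simp add: field_simps)
  hence e: "k * b = a * m" by linarith
  hence "b dvd a * m" by (metis dvd_triv_right)
  hence "b dvd m" using cp by (metis coprime_commute coprime_dvd_mult_right_iff)
  thus ?thesis using q by simp
qed

lemma mu_bound:
  assumes "d \<ge> 2"
  shows "d * mu n d < n + 1"
proof -
  define x where "x = real (n + 1) / real d"
  have xpos: "x > 0" using assms by (simp add: x_def)
  have c1: "\<lceil>x\<rceil> \<ge> 1" using xpos by linarith
  have m: "real (mu n d) = of_int \<lceil>x\<rceil> - 1" using c1 unfolding mu_def x_def[symmetric]
  proof -
    have "nat \<lceil>x\<rceil> \<ge> 1" using c1 by linarith
    hence "real (nat \<lceil>x\<rceil> - 1) = real (nat \<lceil>x\<rceil>) - 1" by (simp add: of_nat_diff)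
    also have "real (nat \<lceil>x\<rceil>) = of_int \<lceil>x\<rceil>" using c1 by simp
    finally show "real (nat \<lceil>x\<rceil> - 1) = of_int \<lceil>x\<rceil> - 1" .
  qed
  have "of_int \<lceil>x\<rceil> - 1 < x" by linarith
  hence "real (mu n d) < x" using m by simp
  hence "real d * real (mu n d) < real (n + 1)" using assms unfolding x_def
    by (simp add: field_simps)
  hence "real (d * mu n d) < real (n + 1)" by simp
  thus ?thesis by linarith
qed

lemma part1:
  fixes p n d N :: nat and a :: "nat \<Rightarrow> nat \<Rightarrow> nat"
  assumes "prime p" and "n \<ge> 1" and "d \<ge> 2"
    and A: "\<forall>j\<in>{1..N}. (\<Sum>i\<le>n. a j i) = d"
    and U: "u \<in> U_min n d" and V: "v \<in> U_min n d"
    and S: "solves n p a N u v \<nu>" and j: "j \<in> {1..N}"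
  shows "\<nu> j \<le> p - 1"
proof (rule ccontr)
  assume "\<not> \<nu> j \<le> p - 1"
  hence nj: "\<nu> j \<ge> p" using prime_gt_0_nat[OF assms(1)] by linarith
  have lt: "aplus n a j i < u i" if i: "i \<le> n + 1" for i
  proof -
    have "p * aplus n a j i \<le> \<nu> j * aplus n a j i" using nj by simp
    also have "\<dots> \<le> (\<Sum>j=1..N. \<nu> j * aplus n a j i)"
      using j by (intro member_le_sum) auto
    finally have "int (p * aplus n a j i) \<le> int p * int (u i) - int (v i)"
      using S i unfolding solves_def by (metis of_nat_le_iff)
    moreover have "v i > 0" using V i unfolding U_min_def by auto
    ultimately have "int p * int (aplus n a j i) < int p * int (u i)" by simp
    hence "int (aplus n a j i) < int (u i)"
      using prime_gt_0_nat[OF assms(1)] by (simp add: mult_less_cancel_left)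
    thus ?thesis by simp
  qed
  have "(\<Sum>i\<le>n. a j i + 1) \<le> (\<Sum>i\<le>n. u i)"
  proof (rule sum_mono)
    fix i assume "i \<in> {..n}"
    thus "a j i + 1 \<le> u i" using lt[of i] by (simp add: aplus_def)
  qed
  moreover have "(\<Sum>i\<le>n. a j i + 1) = d + (n + 1)" 
  proof -
    have "(\<Sum>i\<le>n. a j i + 1) = (\<Sum>i\<le>n. a j i) + (\<Sum>i\<le>n. (1::nat))"
      by (rule sum.distrib)
    thus ?thesis using A j by simp
  qed
  ultimately have "d + (n + 1) \<le> d * (mu n d + 1)" using U unfolding U_min_def
    by simp
  hence "n + 1 \<le> d * mu n d" by (simp add: algebra_simps)
  thus False using mu_bound[OF assms(3), of n] by simp
qed

theorem lemma1p3:
  fixes p n d N :: nat and a :: "nat \<Rightarrow> nat \<Rightarrow> nat"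
  assumes "prime p" and "n \<ge> 1" and "d \<ge> 2"
    and "\<forall>j\<in>{1..N}. (\<Sum>i\<le>n. a j i) = d"
    and "u \<in> U_min n d" and "v \<in> U_min n d"
  shows "(\<forall>\<nu>. solves n p a N u v \<nu> \<longrightarrow> (\<forall>j\<in>{1..N}. \<nu> j \<le> p - 1))
         \<and> (\<forall>\<nu>. p_integral p (A_coeff n d p a N u v \<nu>))"
proof (intro conjI allI impI ballI)
  fix \<nu> j assume "solves n p a N u v \<nu>" "j \<in> {1..N}"
  thus "\<nu> j \<le> p - 1" using part1[OF assms] by blast
next
  fix \<nu>
  show "p_integral p (A_coeff n d p a N u v \<nu>)"
  proof (cases "(\<forall>j. j \<notin> {1..N} \<longrightarrow> \<nu> j = 0) \<and> solves n p a N u v \<nu>")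
    case False
    hence "A_coeff n d p a N u v \<nu> = 0" unfolding A_coeff_def by (rule if_not_P)
    thus ?thesis by (simp add: p_integral_def)
  next
    case True
    define m where "m = (\<Prod>j=1..N. fact (\<nu> j) :: nat)"
    have mpos: "m > 0" unfolding m_def by (simp add: prod_pos)
    have le: "\<forall>j\<in>{1..N}. \<nu> j \<le> p - 1" using part1[OF assms] True by blast
    have "\<not> p dvd m"
    proof
      assume "p dvd m"
      then obtain j where "j \<in> {1..N}" "p dvd fact (\<nu> j)"
        unfolding m_def using assms(1)
        by (metis finite_atLeastAtMost prime_dvd_prod_iff)
      hence "p \<le> \<nu> j" using prime_dvd_fact_iff[OF assms(1)] by simp
      thus False using le \<open>j \<in> {1..N}\<close> prime_gt_0_nat[OF assms(1)] by fastforce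
    qed
    hence cpm: "coprime (int p) (int m)"
      using assms(1) by (simp add: prime_imp_coprime_nat)
    have eq: "A_coeff n d p a N u v \<nu> = of_int ((-1) ^ (mu n d + 1)) / of_int (int m)"
      using True unfolding A_coeff_def m_def by simp
    have "snd (quotient_of (A_coeff n d p a N u v \<nu>)) dvd int m"
      unfolding eq using denom_dvd[of "int m" "(-1) ^ (mu n d + 1)"] mpos by simp
    thus ?thesis unfolding p_integral_def using cpm coprime_divisors[OF dvd_refl] by blast
  qed
qed

end
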